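(* Let $\mathbf{c}\in\mathbb{R}^n$, $\mathcal{K}=\{1,\dots,K\}$ with $K\ge2$, and for each $k\in\mathcal{K}$ let $\mathcal{F}_k=\bigcup_{i\in\mathcal{D}_k}\mathcal{C}_{ki}$ with $\mathcal{D}_k$ finite and each $\mathcal{C}_{ki}\subset\mathbb{R}^n$ compact and convex. Let $$z^{HR}_{\mathcal{K}}=\inf\{\mathbf{c}^\top\mathbf{x}:\ \mathbf{x}=\mathbf{v}_k,\ \mathbf{v}_k\in\operatorname{cl}\operatorname{conv}(\mathcal{F}_k)\ \forall k\in\mathcal{K}\}$$ be the hull relaxation value and let $\boldsymbol{\lambda}_1^*,\dots,\boldsymbol{\lambda}_K^*$ be optimal Lagrange multipliers of this hull relaxation for the constraints $\mathbf{x}=\mathbf{v}_k$. For two disjunctions, which after relabeling are $k=K-1$ and $l=K$, let the basic step replace $\mathcal{F}_{K-1}$ and $\mathcal{F}_K$ by the single disjunction $\mathcal{F}_{K-1}\cap\mathcal{F}_K=\bigcup_{i\in\mathcal{D}_{K-1},\,j\in\mathcal{D}_K}(\mathcal{C}_{K-1,i}\cap\mathcal{C}_{K,j})$, and let $$z'=\inf\{\mathbf{c}^\top\mathbf{x}:\ \mathbf{x}\in\operatorname{cl}\operatorname{conv}(\mathcal{F}_k)\ \forall k\le K-2,\ \mathbf{x}\in\operatorname{cl}\operatorname{conv}(\mathcal{F}_{K-1}\cap\mathcal{F}_K)\}$$ be the hull relaxation value after the basic step, with bound improvement $\Delta(K-1,K)=z'-z^{HR}_{\mathcal{K}}$. Then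 $$\Delta(K-1,K)\ \ge\ L_{\{\{1\},\dots,\{K-2\},\{K-1,K\}\}}\big(\boldsymbol{\lambda}_1^*,\dots,\boldsymbol{\lambda}_{K-2}^*,\boldsymbol{\lambda}_{K-1}^*+\boldsymbol{\lambda}_K^*\big)-LR_{\mathcal{K}}(\boldsymbol{\lambda}_1^*,\dots,\boldsymbol{\lambda}_K^* )\ \ge\ 0.$$
   Context: $\operatorname{cl}\operatorname{conv}$ is the closed convex hull. Optimal Lagrange multipliers of the hull relaxation means: $z^{HR}_{\mathcal{K}}$ is finite and equals $\inf\{(\mathbf{c}-\sum_k\boldsymbol{\lambda}_k^* )^\top\mathbf{x}+\sum_k\boldsymbol{\lambda}_k^{*\top}\mathbf{v}_k:\mathbf{x}\in\mathbb{R}^n,\mathbf{v}_k\in\operatorname{cl}\operatorname{conv}(\mathcal{F}_k)\}$. The Lagrangian relaxation is $LR_{\mathcal{K}}(\boldsymbol{\lambda}_1,\dots,\boldsymbol{\lambda}_K)=\inf\{(\mathbf{c}-\sum_k\boldsymbol{\lambda}_k)^\top\mathbf{x}+\sum_k\boldsymbol{\lambda}_k^\top\mathbf{v}_k:\mathbf{x}\in\mathbb{R}^n,\ \mathbf{v}_k\in\mathcal{F}_k\ \forall k\}$. For a partition $\mathcal{P}=\{\mathcal{J}_1,\dots,\mathcal{J}_P\}$ of $\mathcal{K}$ and $\boldsymbol{\mu}_p\in\mathbb{R}^n$, the partition relaxation is $L_{\mathcal{P}}(\boldsymbol{\mu}_1,\dots,\boldsymbol{\mu}_P)=\sum_{p=1}^P\min\{\boldsymbol{\mu}_p^\top\mathbf{v}:\mathbf{v}\in\bigcap_{k\in\mathcal{J}_p}\mathcal{F}_k\}$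 (minimum over the empty set is $+\infty$). *)

theory Defs
  imports "HOL-Analysis.Analysis" "HOL-Library.Extended_Real"
begin

definition hull_relax :: "real^'n \<Rightarrow> nat set \<Rightarrow> (nat \<Rightarrow> (real^'n) set) \<Rightarrow> ereal" where
  "hull_relax c I F =
     Inf {ereal (c \<bullet> x) | x. \<forall>k\<in>I. x \<in> closure (convex hull (F k))}"

definition lagr_relax :: "real^'n \<Rightarrow> nat \<Rightarrow> (nat \<Rightarrow> (real^'n) set) \<Rightarrow> (nat \<Rightarrow> real^'n) \<Rightarrow> ereal" where
  "lagr_relax c K F lam =
     Inf {ereal ((c - (\<Sum>k\<in>{1..K}. lam k)) \<bullet> x + (\<Sum>k\<in>{1..K}. lam k \<bullet> v k)) | x v.
            \<forall>k\<in>{1..K}. v k \<in> F k}"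

definition hull_lagr :: "real^'n \<Rightarrow> nat \<Rightarrow> (nat \<Rightarrow> (real^'n) set) \<Rightarrow> (nat \<Rightarrow> real^'n) \<Rightarrow> ereal" where
  "hull_lagr c K F lam =
     Inf {ereal ((c - (\<Sum>k\<in>{1..K}. lam k)) \<bullet> x + (\<Sum>k\<in>{1..K}. lam k \<bullet> v k)) | x v.
            \<forall>k\<in>{1..K}. v k \<in> closure (convex hull (F k))}"

definition optimal_hull_multipliers :: "real^'n \<Rightarrow> nat \<Rightarrow> (nat \<Rightarrow> (real^'n) set) \<Rightarrow> (nat \<Rightarrow> real^'n) \<Rightarrow> bool" where
  "optimal_hull_multipliers c K F lam \<longleftrightarrow>
     \<bar>hull_relax c {1..K} F\<bar> \<noteq> \<infinity> \<and> hull_relax c {1..K} F = hull_lagr c K F lam"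

text \<open>Partition relaxation L_P(mu): blocks indexed by P, block p is the index set J p;
  sum over blocks of min { mu_p . v : v in the intersection of F_k, k in J p } (inf of empty = +inf).\<close>
definition part_relax :: "(nat \<Rightarrow> (real^'n) set) \<Rightarrow> nat set \<Rightarrow> (nat \<Rightarrow> nat set) \<Rightarrow> (nat \<Rightarrow> real^'n) \<Rightarrow> ereal" where
  "part_relax F P J mu = (\<Sum>p\<in>P. Inf {ereal (mu p \<bullet> v) | v. v \<in> (\<Inter>k\<in>J p. F k)})"

end

theory Submission
  imports Defs
begin

lemma sub_clhull: "S \<subseteq> closure (convex hull S)"
  by (rule order_trans[OF hull_subset closure_subset])
lemma hull_lagr_le: "hull_lagr c K F lam \<le> lagr_relax c K F lam"
  unfolding hull_lagr_def lagr_relax_def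
proof (rule Inf_superset_mono, rule subsetI)
  fix u assume "u \<in> {ereal ((c - (\<Sum>k\<in>{1..K}. lam k)) \<bullet> x + (\<Sum>k\<in>{1..K}. lam k \<bullet> v k)) | x v.
            \<forall>k\<in>{1..K}. v k \<in> F k}"
  then obtain x v where u: "u = ereal ((c - (\<Sum>k\<in>{1..K}. lam k)) \<bullet> x + (\<Sum>k\<in>{1..K}. lam k \<bullet> v k))"
    and v: "\<forall>k\<in>{1..K}. v k \<in> F k" by blast
  have "\<forall>k\<in>{1..K}. v k \<in> closure (convex hull F k)"
    using v sub_clhull by blast
  then show "u \<in> {ereal ((c - (\<Sum>k\<in>{1..K}. lam k)) \<bullet> x + (\<Sum>k\<in>{1..K}. lam k \<bullet> v k)) | x v.
            \<forall>k\<in>{1..K}. v k \<in> closure (convex hull F k)}"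
    unfolding u by blast
qed

lemma hull_halfspace:
  fixes S :: "(real^'n) set"
  assumes "\<forall>y\<in>S. r \<le> a \<bullet> y" "x \<in> closure (convex hull S)"
  shows "r \<le> a \<bullet> x"
proof -
  have "convex hull S \<subseteq> {x. r \<le> a \<bullet> x}"
    using assms(1) by (intro hull_minimal) (auto simp: convex_halfspace_ge)
  then have "closure (convex hull S) \<subseteq> {x. r \<le> a \<bullet> x}"
    by (intro closure_minimal) (auto simp: closed_halfspace_ge)
  then show ?thesis using assms(2) by auto
qed

lemma inf_attained:
  fixes S :: "(real^'n) set"
  assumes "w \<in> S" "\<forall>y\<in>S. a \<bullet> w \<le> a \<bullet> y"
  shows "Inf {ereal (a \<bullet> v) | v. v \<in> S} = ereal (a \<bullet> w)"
proof (rule antisym)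
  show "Inf {ereal (a \<bullet> v) | v. v \<in> S} \<le> ereal (a \<bullet> w)"
    using assms(1) by (intro Inf_lower) auto
  show "ereal (a \<bullet> w) \<le> Inf {ereal (a \<bullet> v) | v. v \<in> S}"
    using assms(2) by (intro Inf_greatest) auto
qed

lemma minimizer:
  fixes S :: "(real^'n) set"
  assumes "compact S" "S \<noteq> {}"
  shows "\<exists>w\<in>S. \<forall>y\<in>S. a \<bullet> w \<le> a \<bullet> y"
  using continuous_attains_inf[OF assms, of "\<lambda>v. a \<bullet> v"]
  by (simp add: continuous_on_inner continuous_on_const continuous_on_id)

theorem corollary1:
  fixes c :: "real^'n" and K :: nat
    and D :: "nat \<Rightarrow> 'i set" and C :: "nat \<Rightarrow> 'i \<Rightarrow> (real^'n) set"
    and lam :: "nat \<Rightarrow> real^'n"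
  assumes "K \<ge> 2"
    and "\<forall>k\<in>{1..K}. finite (D k)"
    and "\<forall>k\<in>{1..K}. \<forall>i\<in>D k. compact (C k i) \<and> convex (C k i)"
    and "optimal_hull_multipliers c K (\<lambda>k. \<Union>i\<in>D k. C k i) lam"
  shows "hull_relax c {1..K-1}
           (\<lambda>k. if k = K - 1 then (\<Union>i\<in>D (K-1). C (K-1) i) \<inter> (\<Union>j\<in>D K. C K j)
                 else (\<Union>i\<in>D k. C k i))
         - hull_relax c {1..K} (\<lambda>k. \<Union>i\<in>D k. C k i)
       \<ge> part_relax (\<lambda>k. \<Union>i\<in>D k. C k i) {1..K-1}
           (\<lambda>p. if p = K - 1 then {K-1, K} else {p})
           (\<lambda>p. if p = K - 1 then lam (K-1) + lam K else lam p)
         - lagr_relax c K (\<lambda>k. \<Union>i\<in>D k. C k i) lam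
     \<and> part_relax (\<lambda>k. \<Union>i\<in>D k. C k i) {1..K-1}
           (\<lambda>p. if p = K - 1 then {K-1, K} else {p})
           (\<lambda>p. if p = K - 1 then lam (K-1) + lam K else lam p)
         - lagr_relax c K (\<lambda>k. \<Union>i\<in>D k. C k i) lam \<ge> 0"
proof -
  define F where "F = (\<lambda>k. \<Union>i\<in>D k. C k i)"
  obtain m where Km: "K = Suc (Suc m)" using assms(1) by (metis add_2_eq_Suc le_Suc_ex)
  define z where "z = hull_relax c {1..K} F"
  define LR where "LR = lagr_relax c K F lam"
  define z' where "z' = hull_relax c {1..K-1}
           (\<lambda>k. if k = K - 1 then F (K-1) \<inter> F K else F k)"
  define P where "P = part_relax F {1..K-1}
           (\<lambda>p. if p = K - 1 then {K-1, K} else {p})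
           (\<lambda>p. if p = K - 1 then lam (K-1) + lam K else lam p)"
  have zfin: "\<bar>z\<bar> \<noteq> \<infinity>" and zl: "z = hull_lagr c K F lam"
    using assms(4) unfolding optimal_hull_multipliers_def z_def F_def by auto
  then obtain r where zr: "z = ereal r" by (cases z) auto
  have "z \<noteq> \<infinity>" using zfin by auto
  then obtain x0 where x0: "\<forall>k\<in>{1..K}. x0 \<in> closure (convex hull (F k))"
  proof -
    assume h: "\<And>x0. \<forall>k\<in>{1..K}. x0 \<in> closure (convex hull (F k)) \<Longrightarrow> thesis"
    show thesis
    proof (rule ccontr)
      assume "\<not> thesis"
      then have E: "{ereal (c \<bullet> x) |x. \<forall>k\<in>{1..K}. x \<in> closure (convex hull F k)} = {}"
        using h by blast
      have "z = Inf {}" unfolding z_def hull_relax_def by (simp only: E)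
      then show False using \<open>z \<noteq> \<infinity>\<close> by (simp add: top_ereal_def)
    qed
  qed
  have Fne: "F k \<noteq> {}" if "k \<in> {1..K}" for k
    using x0 that by fastforce
  have Fcomp: "compact (F k)" if "k \<in> {1..K}" for k
    using assms(2,3) that unfolding F_def by (intro compact_UN) auto
  define d where "d = c - (\<Sum>k\<in>{1..K}. lam k)"
  have d0: "d = 0"
  proof (rule ccontr)
    assume "d \<noteq> 0"
    then have dd: "d \<bullet> d > 0" by simp
    define S where "S = (\<Sum>k\<in>{1..K}. lam k \<bullet> x0)"
    define t where "t = (r - 1 - S) / (d \<bullet> d)"
    have "hull_lagr c K F lam \<le> ereal (d \<bullet> (t *\<^sub>R d) + (\<Sum>k\<in>{1..K}. lam k \<bullet> (\<lambda>_. x0) k))"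
      unfolding hull_lagr_def d_def
    proof (rule Inf_lower, intro CollectI exI conjI)
      show "\<forall>k\<in>{1..K}. (\<lambda>_. x0) k \<in> closure (convex hull F k)" using x0 by simp
    qed (rule refl)
    also have "d \<bullet> (t *\<^sub>R d) + (\<Sum>k\<in>{1..K}. lam k \<bullet> (\<lambda>_. x0) k) = r - 1"
      using dd unfolding t_def S_def by simp
    finally have "ereal r \<le> ereal (r - 1)" using zl zr by simp
    then show False by simp
  qed
  have csum: "c = (\<Sum>k\<in>{1..K}. lam k)" using d0 unfolding d_def by simp
  have zLR: "z \<le> LR"
    unfolding zl LR_def by (rule hull_lagr_le)
  have "\<forall>k\<in>{1..K}. \<exists>w. w \<in> F k \<and> (\<forall>y\<in>F k. lam k \<bullet> w \<le> lam k \<bullet> y)"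
  proof
    fix k assume "k \<in> {1..K}"
    from minimizer[OF Fcomp[OF this] Fne[OF this], of "lam k"]
    show "\<exists>w. w \<in> F k \<and> (\<forall>y\<in>F k. lam k \<bullet> w \<le> lam k \<bullet> y)" by blast
  qed
  then obtain vk where vk0: "\<forall>k\<in>{1..K}. vk k \<in> F k \<and> (\<forall>y\<in>F k. lam k \<bullet> vk k \<le> lam k \<bullet> y)"
    by (rule bchoice[THEN exE])
  have vk: "\<And>k. k \<in> {1..K} \<Longrightarrow> vk k \<in> F k \<and> (\<forall>y\<in>F k. lam k \<bullet> vk k \<le> lam k \<bullet> y)"
    using vk0 by blast
  have "LR \<le> ereal ((c - (\<Sum>k\<in>{1..K}. lam k)) \<bullet> 0 + (\<Sum>k\<in>{1..K}. lam k \<bullet> vk k))"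
    unfolding LR_def lagr_relax_def
  proof (rule Inf_lower, intro CollectI exI conjI)
    show "\<forall>k\<in>{1..K}. vk k \<in> F k" using vk by blast
  qed (rule refl)
  then have "LR \<noteq> \<infinity>" by auto
  with zLR zr obtain l where LRl: "LR = ereal l" and rl: "r \<le> l" by (cases LR) auto
  show ?thesis
  proof (cases "F (K-1) \<inter> F K = {}")
    case True
    have E: "{ereal (c \<bullet> x) |x. \<forall>k\<in>{1..K-1}. x \<in> closure (convex hull
        (if k = K - 1 then F (K-1) \<inter> F K else F k))} = {}"
    proof -
      have False if "\<forall>k\<in>{1..K-1}. x \<in> closure (convex hull
        (if k = K - 1 then F (K-1) \<inter> F K else F k))" for x
      proof -
        have "K - 1 \<in> {1..K-1}" using Km by simp
        from bspec[OF that this] have "x \<in> closure (convex hull (F (K-1) \<inter> F K))" by simp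
        with True show False by simp
      qed
      then show ?thesis by blast
    qed
    have "z' = \<infinity>"
      unfolding z'_def hull_relax_def by (simp only: E) (simp add: top_ereal_def)
    moreover have "P = \<infinity>"
    proof -
      have "Inf {ereal ((if K-1 = K - 1 then lam (K-1) + lam K else lam (K-1)) \<bullet> v) | v.
               v \<in> (\<Inter>k\<in>(if K-1 = K - 1 then {K-1, K} else {K-1}). F k)} = \<infinity>"
        using True by (auto simp: top_ereal_def)
      then show ?thesis unfolding P_def part_relax_def using Km
        by (subst sum_Pinfty) force
    qed
    ultimately show ?thesis
      using zr LRl unfolding z_def z'_def P_def LR_def F_def by simp
  next
    case False
    have Icomp: "compact (F (K-1) \<inter> F K)" using Fcomp Km by (intro compact_Int) auto
    obtain w where w: "w \<in> F (K-1) \<inter> F K"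
      "\<forall>y\<in>F (K-1) \<inter> F K. (lam (K-1) + lam K) \<bullet> w \<le> (lam (K-1) + lam K) \<bullet> y"
      using minimizer[OF Icomp False] by blast
    define Pr where "Pr = (\<Sum>k\<in>{1..m}. lam k \<bullet> vk k) + (lam (K-1) + lam K) \<bullet> w"
    have PPr: "P = ereal Pr"
    proof -
      have "P = (\<Sum>p\<in>{1..K-1}. ereal (if p = K-1 then (lam (K-1) + lam K) \<bullet> w else lam p \<bullet> vk p))"
        unfolding P_def part_relax_def
      proof (rule sum.cong)
        fix p assume p: "p \<in> {1..K-1}"
        show "Inf {ereal ((if p = K - 1 then lam (K - 1) + lam K else lam p) \<bullet> v) |v.
               v \<in> \<Inter> (F ` (if p = K - 1 then {K - 1, K} else {p}))} =
             ereal (if p = K - 1 then (lam (K - 1) + lam K) \<bullet> w else lam p \<bullet> vk p)"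
        proof (cases "p = K-1")
          case True
          then show ?thesis using inf_attained[OF w(1) w(2)] by simp
        next
          case False
          then have "p \<in> {1..K}" using p by auto
          then show ?thesis using False vk[of p] by (simp add: inf_attained)
        qed
      qed simp
      also have "\<dots> = ereal (\<Sum>p\<in>{1..K-1}. (if p = K-1 then (lam (K-1) + lam K) \<bullet> w else lam p \<bullet> vk p))"
        by simp
      also have "(\<Sum>p\<in>{1..K-1}. (if p = K-1 then (lam (K-1) + lam K) \<bullet> w else lam p \<bullet> vk p)) = Pr"
        unfolding Pr_def Km by (simp add: sum.cl_ivl_Suc)
      finally show ?thesis .
    qed
    have LRPr: "l \<le> Pr"
    proof -
      define V where "V = (\<lambda>k. if k \<ge> K - 1 then w else vk k)"
      have "LR \<le> ereal ((c - (\<Sum>k\<in>{1..K}. lam k)) \<bullet> 0 + (\<Sum>k\<in>{1..K}. lam k \<bullet> V k))"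
        unfolding LR_def lagr_relax_def
      proof (rule Inf_lower, intro CollectI exI conjI ballI)
        fix k assume "k \<in> {1..K}"
        then show "V k \<in> F k" using vk[of k] w unfolding V_def Km
          by (auto simp: le_Suc_eq)
      qed (rule refl)
      also have "(\<Sum>k\<in>{1..K}. lam k \<bullet> V k) = Pr"
        unfolding Pr_def V_def Km by (simp add: sum.cl_ivl_Suc inner_add_left)
      finally show ?thesis using LRl by simp
    qed
    have Prz': "ereal Pr \<le> z'"
      unfolding z'_def hull_relax_def
    proof (rule Inf_greatest, clarify)
      fix x assume x: "\<forall>k\<in>{1..K - 1}. x \<in> closure (convex hull (if k = K - 1 then F (K - 1) \<inter> F K else F k))"
      have "(\<Sum>k\<in>{1..m}. lam k \<bullet> vk k) \<le> (\<Sum>k\<in>{1..m}. lam k \<bullet> x)"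
      proof (rule sum_mono)
        fix k assume k: "k \<in> {1..m}"
        then have "x \<in> closure (convex hull F k)" using x[rule_format, of k] Km by auto
        moreover have "\<forall>y\<in>F k. lam k \<bullet> vk k \<le> lam k \<bullet> y" using vk[of k] k Km by auto
        ultimately show "lam k \<bullet> vk k \<le> lam k \<bullet> x" using hull_halfspace by blast
      qed
      moreover have "(lam (K-1) + lam K) \<bullet> w \<le> (lam (K-1) + lam K) \<bullet> x"
        using hull_halfspace[OF w(2)] x[rule_format, of "K-1"] Km by auto
      moreover have "c \<bullet> x = (\<Sum>k\<in>{1..m}. lam k \<bullet> x) + (lam (K-1) + lam K) \<bullet> x"
        unfolding csum Km by (simp add: sum.cl_ivl_Suc inner_sum_left inner_add_left)
      ultimately show "ereal Pr \<le> ereal (c \<bullet> x)" unfolding Pr_def by simp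
    qed
    have "z' - z \<ge> P - LR \<and> P - LR \<ge> 0"
    proof (cases z')
      case (real a)
      then show ?thesis using Prz' PPr LRPr zr LRl rl by simp
    qed (use Prz' PPr zr LRl LRPr in auto)
    then show ?thesis unfolding z'_def z_def P_def LR_def F_def .
  qed
qed

end
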